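(* Let $G$ be a graph on $n$ vertices. For any integer $c\ge 2$, there are at most $\frac{2n}{c}$ bridges of $G$ both of whose endpoints have degree larger than $c$.
   Context: A bridge is an edge whose deletion increases the number of connected components of the graph. *)

theory Defs
  imports Complex_Main
begin

definition simple_graph :: "'a set \<Rightarrow> 'a set set \<Rightarrow> bool" where
  "simple_graph V E \<longleftrightarrow> finite V \<and> (\<forall>e\<in>E. e \<subseteq> V \<and> card e = 2)"

definition adj_rel :: "'a set set \<Rightarrow> ('a \<times> 'a) set" where
  "adj_rel E = {(u, v). {u, v} \<in> E}"

definition connected_rel :: "'a set \<Rightarrow> 'a set set \<Rightarrow> ('a \<times> 'a) set" where
  "connected_rel V E = (adj_rel E)\<^sup>* \<inter> (V \<times> V)"

definition components :: "'a set \<Rightarrow> 'a set set \<Rightarrow> 'a set set" where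
  "components V E = V // connected_rel V E"

definition num_components :: "'a set \<Rightarrow> 'a set set \<Rightarrow> nat" where
  "num_components V E = card (components V E)"

definition is_bridge :: "'a set \<Rightarrow> 'a set set \<Rightarrow> 'a set \<Rightarrow> bool" where
  "is_bridge V E e \<longleftrightarrow> e \<in> E \<and> num_components V (E - {e}) > num_components V E"

definition degree :: "'a set set \<Rightarrow> 'a \<Rightarrow> nat" where
  "degree E v = card {e \<in> E. v \<in> e}"

end

theory Submission
  imports Defs
begin

lemma adj_sym: "sym (adj_rel E)"
  unfolding adj_rel_def sym_def by (auto simp: insert_commute)

lemma adj_mono: "E \<subseteq> F \<Longrightarrow> adj_rel E \<subseteq> adj_rel F"
  unfolding adj_rel_def by auto

lemma bridge_cut:
  assumes "is_bridge V E e" "e = {x, y}"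
  shows "(x, y) \<notin> (adj_rel (E - {e}))\<^sup>*"
proof
  assume xy: "(x, y) \<in> (adj_rel (E - {e}))\<^sup>*"
  let ?R = "adj_rel (E - {e})"
  have yx: "(y, x) \<in> ?R\<^sup>*" using xy sym_rtrancl[OF adj_sym] by (meson symD)
  have "adj_rel E \<subseteq> ?R\<^sup>*"
  proof
    fix p assume "p \<in> adj_rel E"
    then obtain a b where p: "p = (a, b)" "{a, b} \<in> E" unfolding adj_rel_def by auto
    show "p \<in> ?R\<^sup>*"
    proof (cases "{a, b} = e")
      case True
      then have "(a = x \<and> b = y) \<or> (a = y \<and> b = x)" using assms(2) by (auto simp: doubleton_eq_iff)
      then show ?thesis using xy yx p by auto
    next
      case False
      then have "(a, b) \<in> ?R" using p unfolding adj_rel_def by auto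
      then show ?thesis using p by auto
    qed
  qed
  then have "(adj_rel E)\<^sup>* \<subseteq> ?R\<^sup>*" by (rule rtrancl_subset_rtrancl)
  moreover have "?R\<^sup>* \<subseteq> (adj_rel E)\<^sup>*" by (rule rtrancl_mono[OF adj_mono]) auto
  ultimately have "connected_rel V (E - {e}) = connected_rel V E"
    unfolding connected_rel_def by auto
  then show False using assms(1) unfolding is_bridge_def num_components_def components_def by auto
qed


lemma main:
  fixes c :: nat and d :: "'a \<Rightarrow> nat"
  assumes "finite V" "\<forall>f\<in>E. f \<subseteq> V \<and> card f = 2" "B \<subseteq> E"
    "\<forall>e\<in>B. \<forall>x y. e = {x, y} \<longrightarrow> (x, y) \<notin> (adj_rel (E - {e}))\<^sup>*"
    "\<forall>e\<in>B. \<forall>w\<in>e. c + 1 \<le> degree E w + d w"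
    "B \<noteq> {}"
  shows "c * card B + c + 2 \<le> card V + sum d V"
  using assms
proof (induction "card B" arbitrary: V E B d rule: less_induct)
  case less
  note fV = less.prems(1) and EV = less.prems(2) and BE = less.prems(3)
    and cut = less.prems(4) and deg = less.prems(5)
  have fE: "finite E" using fV EV by (meson PowI finite_Pow_iff finite_subset subsetI)
  have fB: "finite B" using fE BE finite_subset by blast
  obtain e where eB: "e \<in> B" using less.prems(6) by auto
  then have eE: "e \<in> E" using BE by auto
  then obtain u v where e: "e = {u, v}" "u \<noteq> v" using EV card_2_iff by metis
  have uV: "u \<in> V" and vV: "v \<in> V" using EV eE e by auto
  define R where "R = adj_rel (E - {e})"
  have nuv: "(u, v) \<notin> R\<^sup>*" using cut eB e R_def by auto
  define A where "A = {w\<in>V. (u, w) \<in> R\<^sup>*}"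
  define A' where "A' = V - A"
  have uA: "u \<in> A" using uV A_def by auto
  have vA': "v \<in> A'" using vV nuv A_def A'_def by auto
  have closedA: "\<forall>f\<in>E - {e}. f \<inter> A \<noteq> {} \<longrightarrow> f \<subseteq> A"
  proof (intro ballI impI)
    fix f assume f: "f \<in> E - {e}" "f \<inter> A \<noteq> {}"
    then obtain a b where ab: "f = {a, b}" using EV card_2_iff by (metis DiffD1)
    have abV: "a \<in> V" "b \<in> V" using EV f ab by auto
    have r1: "(a, b) \<in> R" "(b, a) \<in> R" using f ab R_def unfolding adj_rel_def by (auto simp: insert_commute)
    show "f \<subseteq> A" using f(2) ab abV r1 unfolding A_def
      by (auto intro: rtrancl_into_rtrancl)
  qed
  have closedA': "\<forall>f\<in>E - {e}. f \<inter> A' \<noteq> {} \<longrightarrow> f \<subseteq> A'"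
  proof (intro ballI impI)
    fix f assume f: "f \<in> E - {e}" "f \<inter> A' \<noteq> {}"
    have "f \<inter> A = {}"
    proof
      show "f \<inter> A \<subseteq> {}"
      proof
        fix a assume "a \<in> f \<inter> A"
        then have "f \<subseteq> A" using closedA f by blast
        then show "a \<in> {}" using f(2) A'_def by auto
      qed
    qed auto
    then show "f \<subseteq> A'" using f EV A'_def by auto
  qed
  have side: "c * card {f\<in>B. f \<subseteq> S} + c + 2 \<le> card S + sum (d(x := d x + 1)) S"
    if S: "S \<subseteq> V" "x \<in> S" "x \<in> e" "\<not> e \<subseteq> S" "\<forall>f\<in>E - {e}. f \<inter> S \<noteq> {} \<longrightarrow> f \<subseteq> S"
    for S x
  proof -
    have fS: "finite S" by (rule finite_subset[OF S(1) fV])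
    define dS where "dS = d(x := d x + 1)"
    have sumS: "sum dS S = sum d S + 1"
    proof -
      have "sum dS S = dS x + sum dS (S - {x})" by (rule sum.remove[OF fS S(2)])
      also have "sum dS (S - {x}) = sum d (S - {x})" unfolding dS_def by (rule sum.cong) auto
      also have "sum d S = d x + sum d (S - {x})" by (rule sum.remove[OF fS S(2)])
      ultimately show ?thesis unfolding dS_def by simp
    qed
    have ex: "w = x" if "w \<in> e" "w \<in> S" for w
    proof (rule ccontr)
      assume "w \<noteq> x"
      then have "e = {w, x}" using e that S(3) by auto
      then show False using S that by auto
    qed
    define ES where "ES = {f\<in>E. f \<subseteq> S}"
    have degS: "degree E w \<le> degree ES w + (if w = x then 1 else 0)" if "w \<in> S" for w
    proof -
      have "{f\<in>E. w \<in> f} \<subseteq> {f\<in>ES. w \<in> f} \<union> (if w = x then {e} else {})"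
        using S(5) that ex unfolding ES_def by auto
      moreover have "finite {f\<in>ES. w \<in> f}" using fE ES_def by auto
      ultimately have "card {f\<in>E. w \<in> f} \<le> card ({f\<in>ES. w \<in> f} \<union> (if w = x then {e} else {}))"
        by (intro card_mono) auto
      also have "\<dots> \<le> card {f\<in>ES. w \<in> f} + card (if w = x then {e} else ({}::'a set set))"
        by (rule card_Un_le)
      finally show ?thesis unfolding degree_def by auto
    qed
    show ?thesis
    proof (cases "{f\<in>B. f \<subseteq> S} = {}")
      case True
      have "{f\<in>E. x \<in> f} \<subseteq> insert e ((\<lambda>w. {x, w}) ` (S - {x}))"
      proof
        fix f assume f: "f \<in> {f\<in>E. x \<in> f}"
        show "f \<in> insert e ((\<lambda>w. {x, w}) ` (S - {x}))"
        proof (cases "f = e")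
          case False
          then have "f \<subseteq> S" using S(2,5) f by auto
          moreover obtain a b where "f = {a, b}" "a \<noteq> b" using f EV card_2_iff by (metis mem_Collect_eq)
          ultimately show ?thesis using f by auto
        qed auto
      qed
      then have "degree E x \<le> card (insert e ((\<lambda>w. {x, w}) ` (S - {x})))"
        unfolding degree_def using fS by (intro card_mono) auto
      also have "\<dots> \<le> Suc (card ((\<lambda>w. {x, w}) ` (S - {x})))" using fS by (simp add: card_insert_le_m1 card_insert_if)
      also have "\<dots> \<le> Suc (card (S - {x}))" using card_image_le fS by (simp add: card_image_le)
      also have "\<dots> = card S" using fS S(2) by (metis card_Suc_Diff1)
      finally have "degree E x \<le> card S" .
      moreover have "c + 1 \<le> degree E x + d x" using deg eB S(3) by auto
      moreover have "d x \<le> sum d S" using fS S(2) by (metis sum_nonneg_leq_bound zero_le order_refl)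
      moreover have "card {f\<in>B. f \<subseteq> S} = 0" by (metis True card.empty)
      ultimately show ?thesis using sumS unfolding dS_def by simp
    next
      case False
      let ?BS = "{f\<in>B. f \<subseteq> S}"
      have lt: "card ?BS < card B"
      proof (rule psubset_card_mono[OF fB])
        show "?BS \<subset> B" using eB S(4) by auto
      qed
      have "c * card ?BS + c + 2 \<le> card S + sum dS S"
      proof (rule less.hyps[OF lt fS])
        show "\<forall>f\<in>ES. f \<subseteq> S \<and> card f = 2" using EV ES_def by auto
        show "?BS \<subseteq> ES" using BE ES_def by auto
        show "?BS \<noteq> {}" by fact
        show "\<forall>e\<in>?BS. \<forall>x y. e = {x, y} \<longrightarrow> (x, y) \<notin> (adj_rel (ES - {e}))\<^sup>*"
        proof (intro ballI allI impI)
          fix f a b assume f: "f \<in> ?BS" "f = {a, b}"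
          have "(adj_rel (ES - {f}))\<^sup>* \<subseteq> (adj_rel (E - {f}))\<^sup>*"
            by (rule rtrancl_mono[OF adj_mono]) (auto simp: ES_def)
          then show "(a, b) \<notin> (adj_rel (ES - {f}))\<^sup>*" using cut f by auto
        qed
        show "\<forall>f\<in>?BS. \<forall>w\<in>f. c + 1 \<le> degree ES w + dS w"
        proof (intro ballI)
          fix f w assume f: "f \<in> ?BS" "w \<in> f"
          then have "c + 1 \<le> degree E w + d w" using deg by auto
          moreover have "degree E w \<le> degree ES w + (if w = x then 1 else 0)" using degS f by blast
          ultimately show "c + 1 \<le> degree ES w + dS w" unfolding dS_def by (auto split: if_splits)
        qed
      qed
      then show ?thesis unfolding dS_def .
    qed
  qed
  have sA: "c * card {f\<in>B. f \<subseteq> A} + c + 2 \<le> card A + sum (d(u := d u + 1)) A"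
    by (rule side) (use uA closedA e nuv vV in \<open>auto simp: A_def\<close>)
  have sA': "c * card {f\<in>B. f \<subseteq> A'} + c + 2 \<le> card A' + sum (d(v := d v + 1)) A'"
    by (rule side) (use vA' closedA' e uA in \<open>auto simp: A'_def\<close>)
  let ?BA = "{f\<in>B. f \<subseteq> A}" and ?BA' = "{f\<in>B. f \<subseteq> A'}"
  have Bdec: "B = insert e (?BA \<union> ?BA')"
  proof
    show "B \<subseteq> insert e (?BA \<union> ?BA')"
    proof
      fix f assume f: "f \<in> B"
      show "f \<in> insert e (?BA \<union> ?BA')"
      proof (cases "f = e")
        case False
        then have fE': "f \<in> E - {e}" using f BE by auto
        then obtain a b where ab: "f = {a, b}" using EV card_2_iff by (metis DiffD1)
        have "a \<in> V" using EV fE' ab by auto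
        then have "a \<in> A \<or> a \<in> A'" using A'_def by auto
        moreover have "a \<in> A \<Longrightarrow> f \<subseteq> A" using closedA[rule_format, OF fE'] ab by auto
        moreover have "a \<in> A' \<Longrightarrow> f \<subseteq> A'" using closedA'[rule_format, OF fE'] ab by auto
        ultimately have "f \<subseteq> A \<or> f \<subseteq> A'" by auto
        then show ?thesis using f by auto
      qed auto
    qed
  qed (use eB in auto)
  have eN: "e \<notin> ?BA \<union> ?BA'" using uA vA' e A'_def by auto
  have disj: "?BA \<inter> ?BA' = {}"
  proof (rule ccontr)
    assume "?BA \<inter> ?BA' \<noteq> {}"
    then obtain f where f: "f \<in> B" "f \<subseteq> A" "f \<subseteq> A'" by auto
    then have "f = {}" using A'_def by auto
    then show False using f BE EV by fastforce
  qed
  have cB: "card B = Suc (card ?BA + card ?BA')"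
  proof -
    have "finite (?BA \<union> ?BA')" using fB by auto
    then have "card B = Suc (card (?BA \<union> ?BA'))" using eN by (subst Bdec) simp
    also have "card (?BA \<union> ?BA') = card ?BA + card ?BA'"
      using fB disj by (intro card_Un_disjoint) auto
    finally show ?thesis .
  qed
  have fA: "finite A" and fA': "finite A'" using fV A_def A'_def by auto
  have sumu: "sum (d(u := d u + 1)) A = sum d A + 1"
  proof -
    have "sum (d(u := d u + 1)) A = (d(u := d u + 1)) u + sum (d(u := d u + 1)) (A - {u})"
      by (rule sum.remove[OF fA uA])
    also have "sum (d(u := d u + 1)) (A - {u}) = sum d (A - {u})" by (rule sum.cong) auto
    also have "sum d A = d u + sum d (A - {u})" by (rule sum.remove[OF fA uA])
    ultimately show ?thesis by simp
  qed
  have sumv: "sum (d(v := d v + 1)) A' = sum d A' + 1"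
  proof -
    have "sum (d(v := d v + 1)) A' = (d(v := d v + 1)) v + sum (d(v := d v + 1)) (A' - {v})"
      by (rule sum.remove[OF fA' vA'])
    also have "sum (d(v := d v + 1)) (A' - {v}) = sum d (A' - {v})" by (rule sum.cong) auto
    also have "sum d A' = d v + sum d (A' - {v})" by (rule sum.remove[OF fA' vA'])
    ultimately show ?thesis by simp
  qed
  have AV: "A \<subseteq> V" using A_def by auto
  have sV: "sum d V = sum d A + sum d A'"
    using sum.subset_diff[OF AV fV, of d] A'_def by (simp add: add.commute)
  have cV: "card V = card A + card A'"
    using card_Diff_subset[OF fA AV] card_mono[OF fV AV] A'_def by simp
  show ?case using sA sA' sumu sumv sV cV cB by (simp add: algebra_simps)
qed

theorem lemma9p2:
  fixes V :: "'a set" and E :: "'a set set" and n c :: nat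
  assumes "simple_graph V E" and "card V = n" and "c \<ge> 2"
  shows "real (card {e. is_bridge V E e \<and> (\<forall>v\<in>e. degree E v > c)}) \<le> 2 * real n / real c"
proof (cases "{e. is_bridge V E e \<and> (\<forall>v\<in>e. degree E v > c)} = {}")
  case True
  have "card {e. is_bridge V E e \<and> (\<forall>v\<in>e. degree E v > c)} = 0"
    using True by (simp only: card.empty)
  then show ?thesis by simp
next
  case False
  let ?B = "{e. is_bridge V E e \<and> (\<forall>v\<in>e. degree E v > c)}"
  have "c * card ?B + c + 2 \<le> card V + sum (\<lambda>_. 0) V"
  proof (rule main)
    show "finite V" "\<forall>f\<in>E. f \<subseteq> V \<and> card f = 2" using assms(1) unfolding simple_graph_def by auto
    show "?B \<subseteq> E"
    proof (rule subsetI)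
      fix e assume "e \<in> ?B"
      then have "is_bridge V E e" by simp
      then show "e \<in> E" unfolding is_bridge_def by simp
    qed
    show "\<forall>e\<in>?B. \<forall>x y. e = {x, y} \<longrightarrow> (x, y) \<notin> (adj_rel (E - {e}))\<^sup>*"
    proof (intro ballI allI impI)
      fix e x y assume "e \<in> ?B" "e = {x, y}"
      then show "(x, y) \<notin> (adj_rel (E - {e}))\<^sup>*" using bridge_cut[of V E e x y] by simp
    qed
    show "\<forall>e\<in>?B. \<forall>w\<in>e. c + 1 \<le> degree E w + 0" by auto
    show "?B \<noteq> {}" by fact
  qed
  then have "c * card ?B \<le> n" using assms(2) by simp
  then have "real (c * card ?B) \<le> real n" by (simp only: of_nat_le_iff)
  then have "real c * real (card ?B) \<le> 2 * real n" by simp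
  moreover have "real c > 0" using assms(3) by simp
  ultimately show ?thesis by (simp add: pos_le_divide_eq mult.commute)
qed

end
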